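(* Let $D_M>0$ be a constant such that for every $n\in\mathbb N$ and all $x_1,\dots,x_n\in T^*$ with pairwise disjoint supports and $\min\operatorname{supp}(x_k)\ge n$ one has $\|\sum_kx_k\|_{T^*}\le D_M\max_k\|x_k\|_{T^*}$. Let $k\in\mathbb N$ and $k=n_0<n_1<\dots<n_k$. For $j=0,1,\dots,k$ put $R_j=(k,n_j]\times[1,n_j]\subset\mathbb N^2$, and for $j=1,\dots,k$ let $z_j\in P_{R_j\setminus R_{j-1}}(T^*(T^* ))$ with $\|z_j\|\le1$. Then for all scalars $(a_j)_{j=1}^k$, $$\Big\|\sum_{j=1}^ka_jz_j\Big\|\le 3D_M\max_{1\le j\le k}|a_j|.$$
   Context: $T^*$ is the dual of Tsirelson's space $T$ (completion of $c_{00}$ under $\|x\|_T=\max\{\|x\|_\infty,\frac12\sup\sum_{j=1}^n\|E_j(x)\|_T\}$, supremum over $n$ and finite sets $n\le E_1<\dots<E_n$), with $1$-unconditional basis $(e_j)$. $T^*(T^* )$ is the space of sequences $(x_i)$ in $T^*$ with $\sum\|x_i\|e_i$ convergent in $T^*$, normed by $\|(x_i)\|=\|\sum_i\|x_i\|e_i\|_{T^*}$. The $i$-th component is the $i$-th copy of $T^*$, with basis $(e^{(i)}_s)_s$. For $R\subset\mathbb N^2$, $P_R$ is the norm-one projection $\sum_{i,s}a_{(i,s)}e^{(i)}_s\mapsto\sum_{(i,s)\in R}a_{(i,s)}e^{(i)}_s$ (first coordinate = component index $i$, second = basis index $s$). Intervals are in $\mathbb N$. *)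

theory Defs
  imports Complex_Main
begin

(* Sequences are functions nat => real; the natural numbers used as indices are
   1,2,3,...; coordinate 0 is unused and required to be 0. Real scalars. *)

definition supp :: "(nat \<Rightarrow> real) \<Rightarrow> nat set" where
  "supp x = {i. x i \<noteq> 0}"

definition fin_supp :: "(nat \<Rightarrow> real) \<Rightarrow> bool" where
  "fin_supp x \<longleftrightarrow> finite (supp x) \<and> x 0 = 0"

definition restr :: "nat set \<Rightarrow> (nat \<Rightarrow> real) \<Rightarrow> nat \<Rightarrow> real" where
  "restr E x = (\<lambda>i. if i \<in> E then x i else 0)"

definition supnorm :: "(nat \<Rightarrow> real) \<Rightarrow> real" where
  "supnorm x = Sup (range (\<lambda>i. \<bar>x i\<bar>))"

definition admissible :: "nat set list \<Rightarrow> bool" where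
  "admissible Es \<longleftrightarrow> Es \<noteq> [] \<and> (\<forall>E\<in>set Es. finite E \<and> E \<noteq> {}) \<and>
     length Es \<le> Min (hd Es) \<and>
     (\<forall>j. Suc j < length Es \<longrightarrow> Max (Es ! j) < Min (Es ! Suc j))"

(* iterates of the implicit Tsirelson norm equation; the Tsirelson norm is their supremum *)
fun tnorm_iter :: "nat \<Rightarrow> (nat \<Rightarrow> real) \<Rightarrow> real" where
  "tnorm_iter 0 x = supnorm x"
| "tnorm_iter (Suc m) x = max (supnorm x)
     (1/2 * Sup {sum_list (map (\<lambda>E. tnorm_iter m (restr E x)) Es) | Es. admissible Es})"

definition tnorm :: "(nat \<Rightarrow> real) \<Rightarrow> real" where
  "tnorm x = Sup (range (\<lambda>m. tnorm_iter m x))"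

definition dual_set :: "(nat \<Rightarrow> real) \<Rightarrow> real set" where
  "dual_set y = {\<bar>\<Sum>i\<in>supp x. y i * x i\<bar> | x. fin_supp x \<and> tnorm x \<le> 1}"

definition in_Tstar :: "(nat \<Rightarrow> real) \<Rightarrow> bool" where
  "in_Tstar y \<longleftrightarrow> y 0 = 0 \<and> bdd_above (dual_set y)"

definition tsnorm :: "(nat \<Rightarrow> real) \<Rightarrow> real" where
  "tsnorm y = Sup (dual_set y)"

(* TT = T-star(T-star): z i s = coefficient of e^{(i)}_s *)
definition TTspace :: "(nat \<Rightarrow> nat \<Rightarrow> real) set" where
  "TTspace = {z. z 0 = (\<lambda>s. 0) \<and> (\<forall>i. in_Tstar (z i)) \<and> in_Tstar (\<lambda>i. tsnorm (z i))}"

definition ttnorm :: "(nat \<Rightarrow> nat \<Rightarrow> real) \<Rightarrow> real" where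
  "ttnorm z = tsnorm (\<lambda>i. tsnorm (z i))"

definition projR :: "(nat \<times> nat) set \<Rightarrow> (nat \<Rightarrow> nat \<Rightarrow> real) \<Rightarrow> nat \<Rightarrow> nat \<Rightarrow> real" where
  "projR R z = (\<lambda>i s. if (i, s) \<in> R then z i s else 0)"

definition Rset :: "nat \<Rightarrow> nat \<Rightarrow> (nat \<times> nat) set" where
  "Rset k N = {(i, s). k < i \<and> i \<le> N \<and> 1 \<le> s \<and> s \<le> N}"

end

theory Submission
  imports Defs
begin

definition l1 :: "(nat \<Rightarrow> real) \<Rightarrow> real" where
  "l1 x = (\<Sum>i\<in>supp x. \<bar>x i\<bar>)"

definition Sset :: "nat \<Rightarrow> (nat \<Rightarrow> real) \<Rightarrow> real set" where
  "Sset m x = {sum_list (map (\<lambda>E. tnorm_iter m (restr E x)) Es) | Es. admissible Es}"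

lemma tnorm_iter_Suc': "tnorm_iter (Suc m) x = max (supnorm x) (1/2 * Sup (Sset m x))"
  by (simp add: Sset_def)

lemma supp_restr: "supp (restr E x) = supp x \<inter> E"
  by (auto simp: supp_def restr_def)

lemma fin_supp_restr: "fin_supp x \<Longrightarrow> fin_supp (restr E x)"
  unfolding fin_supp_def supp_restr by (auto simp: restr_def)

lemma range_abs_sub: "range (\<lambda>i. \<bar>x i\<bar>) \<subseteq> insert 0 ((\<lambda>i. \<bar>x i\<bar>) ` supp x)"
  by (auto simp: supp_def)

lemma bdd_range_abs: "fin_supp x \<Longrightarrow> bdd_above (range (\<lambda>i. \<bar>x i\<bar>))"
  by (rule bdd_above_finite, rule finite_subset[OF range_abs_sub]) (auto simp: fin_supp_def)

lemma abs_le_supnorm: "fin_supp x \<Longrightarrow> \<bar>x i\<bar> \<le> supnorm x"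
  unfolding supnorm_def by (rule cSup_upper[OF _ bdd_range_abs]) auto

lemma supnorm_nonneg: "fin_supp x \<Longrightarrow> 0 \<le> supnorm x"
  using abs_le_supnorm[of x 0] by simp

lemma l1_nonneg: "0 \<le> l1 x"
  unfolding l1_def by (rule sum_nonneg) auto

lemma abs_le_l1: "fin_supp x \<Longrightarrow> \<bar>x i\<bar> \<le> l1 x"
proof (cases "i \<in> supp x")
  case True
  assume "fin_supp x"
  then show ?thesis unfolding l1_def
    by (intro member_le_sum[OF True]) (auto simp: fin_supp_def)
next
  case False then show ?thesis using l1_nonneg[of x] by (simp add: supp_def)
qed

lemma supnorm_le_l1: "fin_supp x \<Longrightarrow> supnorm x \<le> l1 x"
  unfolding supnorm_def by (rule cSup_least) (auto intro: abs_le_l1)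

lemma adm_lt:
  assumes "admissible Es" shows "i < j \<Longrightarrow> j < length Es \<Longrightarrow> a \<in> Es!i \<Longrightarrow> b \<in> Es!j \<Longrightarrow> a < b"
proof (induction j arbitrary: b)
  case 0 then show ?case by simp
next
  case (Suc j)
  have fj: "finite (Es!j)" "Es!j \<noteq> {}" "finite (Es!Suc j)" "Es!Suc j \<noteq> {}"
    using assms Suc.prems nth_mem[of j Es] nth_mem[of "Suc j" Es] unfolding admissible_def by auto
  have mm: "Max (Es!j) < Min (Es!Suc j)" using assms Suc.prems unfolding admissible_def by auto
  have b: "Min (Es!Suc j) \<le> b" using fj Suc.prems by auto
  show ?case
  proof (cases "i = j")
    case True
    then have "a \<le> Max (Es!j)" using fj Suc.prems by auto
    then show ?thesis using mm b by linarith
  next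
    case False
    then have "a < Max (Es!j)" using Suc.IH[of "Max (Es!j)"] Suc.prems fj by auto
    then show ?thesis using mm b by linarith
  qed
qed

lemma adm_sum_l1:
  assumes "admissible Es" "fin_supp x"
  shows "sum_list (map (\<lambda>E. l1 (restr E x)) Es) \<le> l1 x"
proof -
  have "sum_list (map (\<lambda>E. l1 (restr E x)) Es) = (\<Sum>j\<in>{0..<length Es}. l1 (restr (Es!j) x))"
    by (simp add: sum_list_sum_nth)
  also have "\<dots> = (\<Sum>j\<in>{0..<length Es}. \<Sum>i\<in>supp x \<inter> Es!j. \<bar>x i\<bar>)"
    by (intro sum.cong refl, unfold l1_def supp_restr, rule sum.cong, simp, simp add: restr_def)
  also have "\<dots> = (\<Sum>i\<in>(\<Union>j\<in>{0..<length Es}. supp x \<inter> Es!j). \<bar>x i\<bar>)"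
  proof (rule sum.UNION_disjoint[symmetric])
    show "finite {0..<length Es}" by simp
    show "\<forall>j\<in>{0..<length Es}. finite (supp x \<inter> Es ! j)" using assms(2) by (auto simp: fin_supp_def)
    show "\<forall>i\<in>{0..<length Es}. \<forall>j\<in>{0..<length Es}. i \<noteq> j \<longrightarrow> supp x \<inter> Es ! i \<inter> (supp x \<inter> Es ! j) = {}"
    proof (intro ballI impI)
      fix i j assume ij: "i \<in> {0..<length Es}" "j \<in> {0..<length Es}" "i \<noteq> j"
      show "supp x \<inter> Es ! i \<inter> (supp x \<inter> Es ! j) = {}"
      proof (cases "i < j")
        case True then show ?thesis using adm_lt[OF assms(1), of i j] ij by fastforce
      next
        case False then have "j < i" using ij by simp
        then show ?thesis using adm_lt[OF assms(1), of j i] ij by fastforce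
      qed
    qed
  qed
  also have "\<dots> \<le> l1 x" unfolding l1_def
    by (rule sum_mono2) (use assms(2) in \<open>auto simp: fin_supp_def\<close>)
  finally show ?thesis .
qed

lemma adm_single: "admissible [{1}]"
  by (simp add: admissible_def)

lemma Sset_ne: "Sset m x \<noteq> {}"
  unfolding Sset_def using adm_single by blast

lemma Sset_mem: "admissible Es \<Longrightarrow> sum_list (map (\<lambda>E. tnorm_iter m (restr E x)) Es) \<in> Sset m x"
  unfolding Sset_def by blast

lemma tnorm_iter_bounds: "fin_supp x \<Longrightarrow> 0 \<le> tnorm_iter m x \<and> tnorm_iter m x \<le> l1 x"
proof (induction m arbitrary: x)
  case 0 then show ?case using supnorm_nonneg supnorm_le_l1 by simp
next
  case (Suc m)
  have "\<forall>s\<in>Sset m x. s \<le> l1 x"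
  proof
    fix s assume "s \<in> Sset m x"
    then obtain Es where Es: "admissible Es" "s = sum_list (map (\<lambda>E. tnorm_iter m (restr E x)) Es)"
      unfolding Sset_def by blast
    have "s \<le> sum_list (map (\<lambda>E. l1 (restr E x)) Es)"
      unfolding Es(2) by (rule sum_list_mono) (use Suc.IH fin_supp_restr Suc.prems in blast)
    also have "\<dots> \<le> l1 x" by (rule adm_sum_l1[OF Es(1) Suc.prems])
    finally show "s \<le> l1 x" .
  qed
  then have "Sup (Sset m x) \<le> l1 x" using Sset_ne by (intro cSup_least) auto
  then show ?case unfolding tnorm_iter_Suc'
    using supnorm_nonneg[OF Suc.prems] supnorm_le_l1[OF Suc.prems] l1_nonneg[of x] by auto
qed

lemma Sset_bdd: "fin_supp x \<Longrightarrow> bdd_above (Sset m x)"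
proof -
  assume fx: "fin_supp x"
  have "\<forall>s\<in>Sset m x. s \<le> l1 x"
  proof
    fix s assume "s \<in> Sset m x"
    then obtain Es where Es: "admissible Es" "s = sum_list (map (\<lambda>E. tnorm_iter m (restr E x)) Es)"
      unfolding Sset_def by blast
    have "s \<le> sum_list (map (\<lambda>E. l1 (restr E x)) Es)"
      unfolding Es(2) by (rule sum_list_mono) (use tnorm_iter_bounds fin_supp_restr fx in blast)
    also have "\<dots> \<le> l1 x" by (rule adm_sum_l1[OF Es(1) fx])
    finally show "s \<le> l1 x" .
  qed
  then show ?thesis by (auto simp: bdd_above_def)
qed

lemma bdd_iter: "fin_supp x \<Longrightarrow> bdd_above (range (\<lambda>m. tnorm_iter m x))"
  using tnorm_iter_bounds by (auto simp: bdd_above_def)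

lemma iter_le_tnorm: "fin_supp x \<Longrightarrow> tnorm_iter m x \<le> tnorm x"
  unfolding tnorm_def by (rule cSup_upper[OF _ bdd_iter]) auto

lemma tnorm_nonneg: "fin_supp x \<Longrightarrow> 0 \<le> tnorm x"
  using iter_le_tnorm[of x 0] tnorm_iter_bounds[of x 0] by linarith

lemma tnorm_le_l1: "fin_supp x \<Longrightarrow> tnorm x \<le> l1 x"
  unfolding tnorm_def by (rule cSup_least) (auto simp: tnorm_iter_bounds)

lemma abs_le_tnorm: "fin_supp x \<Longrightarrow> \<bar>x i\<bar> \<le> tnorm x"
  using abs_le_supnorm[of x i] iter_le_tnorm[of x 0] by simp

lemma fin_supp_zero: "fin_supp (\<lambda>_. 0)"
  by (simp add: fin_supp_def supp_def)

lemma tnorm_zero: "tnorm (\<lambda>_. 0) = 0"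
proof -
  have "l1 (\<lambda>_. 0) = 0" by (simp add: l1_def supp_def)
  then show ?thesis using tnorm_le_l1[OF fin_supp_zero] tnorm_nonneg[OF fin_supp_zero] by simp
qed

lemma iter_mono: "fin_supp x \<Longrightarrow> tnorm_iter m x \<le> tnorm_iter (Suc m) x"
proof (induction m arbitrary: x)
  case 0 then show ?case by simp
next
  case (Suc m)
  have "Sup (Sset m x) \<le> Sup (Sset (Suc m) x)"
  proof (rule cSup_mono[OF Sset_ne Sset_bdd[OF Suc.prems]])
    fix b assume "b \<in> Sset m x"
    then obtain Es where Es: "admissible Es" "b = sum_list (map (\<lambda>E. tnorm_iter m (restr E x)) Es)"
      unfolding Sset_def by blast
    have "b \<le> sum_list (map (\<lambda>E. tnorm_iter (Suc m) (restr E x)) Es)"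
      unfolding Es(2) by (rule sum_list_mono) (use Suc.IH fin_supp_restr Suc.prems in blast)
    then show "\<exists>a\<in>Sset (Suc m) x. b \<le> a" using Sset_mem[OF Es(1)] by blast
  qed
  then show ?case unfolding tnorm_iter_Suc'[of "Suc m"] tnorm_iter_Suc'[of m] by auto
qed

lemma iter_lim: "fin_supp x \<Longrightarrow> (\<lambda>m. tnorm_iter m x) \<longlonglongrightarrow> tnorm x"
  unfolding tnorm_def by (rule LIMSEQ_incseq_SUP[OF bdd_iter]) (auto intro: incseq_SucI iter_mono)

lemma lower_est:
  assumes "admissible Es" "fin_supp x"
  shows "sum_list (map (\<lambda>E. tnorm (restr E x)) Es) \<le> 2 * tnorm x"
proof -
  have lim: "(\<lambda>m. sum_list (map (\<lambda>E. tnorm_iter m (restr E x)) Es)) \<longlonglongrightarrow> sum_list (map (\<lambda>E. tnorm (restr E x)) Es)"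
  proof (induction Es)
    case Nil then show ?case by simp
  next
    case (Cons E Es) then show ?case
      by (simp, intro tendsto_add iter_lim fin_supp_restr assms(2))
  qed
  show ?thesis
  proof (rule LIMSEQ_le_const2[OF lim], intro exI allI impI)
    fix m
    have "sum_list (map (\<lambda>E. tnorm_iter m (restr E x)) Es) \<le> Sup (Sset m x)"
      by (rule cSup_upper[OF Sset_mem[OF assms(1)] Sset_bdd[OF assms(2)]])
    also have "\<dots> \<le> 2 * tnorm_iter (Suc m) x"
    proof -
      have "1/2 * Sup (Sset m x) \<le> tnorm_iter (Suc m) x" unfolding tnorm_iter_Suc' by simp
      then show ?thesis by linarith
    qed
    also have "\<dots> \<le> 2 * tnorm x" using iter_le_tnorm[OF assms(2), of "Suc m"] by linarith
    finally show "sum_list (map (\<lambda>E. tnorm_iter m (restr E x)) Es) \<le> 2 * tnorm x" .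
  qed
qed


lemma iter_abs: "(\<forall>i. \<bar>x i\<bar> = \<bar>y i\<bar>) \<Longrightarrow> tnorm_iter m x = tnorm_iter m y"
proof (induction m arbitrary: x y)
  case 0
  then show ?case by (simp add: supnorm_def)
next
  case (Suc m)
  have s: "supnorm x = supnorm y" using Suc.prems by (simp add: supnorm_def)
  have e: "\<And>E. tnorm_iter m (restr E x) = tnorm_iter m (restr E y)"
    by (rule Suc.IH) (use Suc.prems in \<open>auto simp: restr_def\<close>)
  have "Sset m x = Sset m y" unfolding Sset_def e ..
  then show ?case using s by (simp only: tnorm_iter_Suc')
qed

lemma tnorm_abs: "(\<forall>i. \<bar>x i\<bar> = \<bar>y i\<bar>) \<Longrightarrow> tnorm x = tnorm y"
  unfolding tnorm_def using iter_abs by metis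

lemma sup_scale:
  fixes S :: "real set"
  assumes "S \<noteq> {}" "bdd_above S" "0 < c"
  shows "Sup ((\<lambda>v. c * v) ` S) = c * Sup S"
proof (rule antisym)
  show "Sup ((\<lambda>v. c * v) ` S) \<le> c * Sup S"
    using assms by (intro cSup_least) (auto intro: cSup_upper)
  obtain M where M: "\<And>v. v \<in> S \<Longrightarrow> v \<le> M" using assms(2) unfolding bdd_above_def by blast
  have bdd: "bdd_above ((\<lambda>v. c * v) ` S)"
  proof (rule bdd_aboveI)
    fix w assume "w \<in> (\<lambda>v. c * v) ` S"
    then obtain v where "v \<in> S" "w = c * v" by blast
    then show "w \<le> c * M" using M assms(3) by (simp add: mult_left_mono)
  qed
  have "Sup S \<le> Sup ((\<lambda>v. c * v) ` S) / c"
  proof (rule cSup_least[OF assms(1)])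
    fix v assume "v \<in> S"
    then have "c * v \<le> Sup ((\<lambda>v. c * v) ` S)" by (intro cSup_upper[OF _ bdd]) auto
    then show "v \<le> Sup ((\<lambda>v. c * v) ` S) / c" using assms(3) by (simp add: field_simps)
  qed
  then show "c * Sup S \<le> Sup ((\<lambda>v. c * v) ` S)" using assms(3) by (simp add: field_simps)
qed

lemma supp_scale: "c \<noteq> 0 \<Longrightarrow> supp (\<lambda>i. c * x i) = supp x"
  by (auto simp: supp_def)

lemma fin_supp_scale: "fin_supp x \<Longrightarrow> fin_supp (\<lambda>i. c * x i)"
  unfolding fin_supp_def supp_def by (auto elim: finite_subset[rotated])

lemma iter_scale: "fin_supp x \<Longrightarrow> 0 < c \<Longrightarrow> tnorm_iter m (\<lambda>i. c * x i) = c * tnorm_iter m x"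
proof (induction m arbitrary: x)
  case 0
  have "range (\<lambda>i. \<bar>c * x i\<bar>) = (\<lambda>v. c * v) ` range (\<lambda>i. \<bar>x i\<bar>)"
    using 0 by (auto simp: abs_mult)
  then show ?case using sup_scale[of "range (\<lambda>i. \<bar>x i\<bar>)" c] bdd_range_abs[OF 0(1)] 0(2)
    by (simp add: supnorm_def)
next
  case (Suc m)
  have r: "\<And>E. restr E (\<lambda>i. c * x i) = (\<lambda>i. c * restr E x i)" by (auto simp: restr_def)
  have e: "\<And>E. tnorm_iter m (restr E (\<lambda>i. c * x i)) = c * tnorm_iter m (restr E x)"
    unfolding r by (rule Suc.IH[OF fin_supp_restr[OF Suc.prems(1)] Suc.prems(2)])
  have "Sset m (\<lambda>i. c * x i) = (\<lambda>v. c * v) ` Sset m x"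
    unfolding Sset_def e by (auto simp: sum_list_const_mult)
  then have S: "Sup (Sset m (\<lambda>i. c * x i)) = c * Sup (Sset m x)"
    using sup_scale[OF Sset_ne Sset_bdd[OF Suc.prems(1)] Suc.prems(2)] by simp
  have s: "supnorm (\<lambda>i. c * x i) = c * supnorm x"
  proof -
    have "range (\<lambda>i. \<bar>c * x i\<bar>) = (\<lambda>v. c * v) ` range (\<lambda>i. \<bar>x i\<bar>)"
      using Suc.prems by (auto simp: abs_mult)
    then show ?thesis using sup_scale[of "range (\<lambda>i. \<bar>x i\<bar>)" c] bdd_range_abs[OF Suc.prems(1)] Suc.prems(2)
      by (simp add: supnorm_def)
  qed
  show ?case unfolding tnorm_iter_Suc' S s using Suc.prems(2)
    by (simp add: max_mult_distrib_left)
qed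

lemma tnorm_scale: "fin_supp x \<Longrightarrow> 0 < c \<Longrightarrow> tnorm (\<lambda>i. c * x i) = c * tnorm x"
proof -
  assume a: "fin_supp x" "0 < c"
  have "range (\<lambda>m. tnorm_iter m (\<lambda>i. c * x i)) = (\<lambda>v. c * v) ` range (\<lambda>m. tnorm_iter m x)"
    using iter_scale[OF a] by auto
  then show ?thesis unfolding tnorm_def using sup_scale[OF _ bdd_iter[OF a(1)] a(2)] by simp
qed

lemma zero_in_dual: "0 \<in> dual_set y"
proof -
  have "supp (\<lambda>_. 0::real) = {}" by (simp add: supp_def)
  then show ?thesis unfolding dual_set_def using fin_supp_zero tnorm_zero
    by (intro CollectI exI[of _ "\<lambda>_. 0"]) auto
qed

lemma tsnorm_nonneg: "in_Tstar y \<Longrightarrow> 0 \<le> tsnorm y"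
  unfolding tsnorm_def in_Tstar_def by (intro cSup_upper zero_in_dual) auto

lemma tsnorm_le:
  assumes "\<And>x. fin_supp x \<Longrightarrow> tnorm x \<le> 1 \<Longrightarrow> \<bar>\<Sum>i\<in>supp x. y i * x i\<bar> \<le> c"
  shows "tsnorm y \<le> c"
  unfolding tsnorm_def
proof (rule cSup_least)
  show "dual_set y \<noteq> {}" using zero_in_dual by auto
  fix v assume "v \<in> dual_set y"
  then show "v \<le> c" unfolding dual_set_def using assms by auto
qed

lemma dual_le_tsnorm:
  "in_Tstar y \<Longrightarrow> fin_supp x \<Longrightarrow> tnorm x \<le> 1 \<Longrightarrow> \<bar>\<Sum>i\<in>supp x. y i * x i\<bar> \<le> tsnorm y"
  unfolding tsnorm_def in_Tstar_def by (intro cSup_upper) (auto simp: dual_set_def)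

lemma pair_le:
  assumes y: "in_Tstar y" and x: "fin_supp x"
  shows "\<bar>\<Sum>i\<in>supp x. y i * x i\<bar> \<le> tsnorm y * tnorm x"
proof (cases "tnorm x = 0")
  case True
  then have "\<forall>i. x i = 0" using abs_le_tnorm[OF x] by (metis abs_le_zero_iff)
  then have "supp x = {}" by (simp add: supp_def)
  then show ?thesis using True by simp
next
  case False
  define t where "t = tnorm x"
  have t: "0 < t" using False tnorm_nonneg[OF x] unfolding t_def by linarith
  define x' where "x' = (\<lambda>i. (1/t) * x i)"
  have fx': "fin_supp x'" unfolding x'_def by (rule fin_supp_scale[OF x])
  have sx': "supp x' = supp x" unfolding x'_def using t by (intro supp_scale) simp
  have tx': "tnorm x' = 1" unfolding x'_def using tnorm_scale[OF x, of "1/t"] t unfolding t_def by simp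
  have "\<bar>\<Sum>i\<in>supp x'. y i * x' i\<bar> \<le> tsnorm y" using dual_le_tsnorm[OF y fx'] tx' by simp
  moreover have "(\<Sum>i\<in>supp x'. y i * x' i) = (1/t) * (\<Sum>i\<in>supp x. y i * x i)"
    unfolding sx' by (simp add: x'_def sum_distrib_left algebra_simps)
  ultimately have "(1/t) * \<bar>\<Sum>i\<in>supp x. y i * x i\<bar> \<le> tsnorm y" using t by (simp add: abs_mult)
  then show ?thesis using t unfolding t_def[symmetric] by (simp add: field_simps)
qed

lemma fs_Tstar:
  assumes "y 0 = 0" "finite (supp y)"
  shows "in_Tstar y"
  unfolding in_Tstar_def bdd_above_def
proof (intro conjI assms(1) exI[of _ "l1 y"] ballI)
  fix v assume "v \<in> dual_set y"
  then obtain x where x: "fin_supp x" "tnorm x \<le> 1" "v = \<bar>\<Sum>i\<in>supp x. y i * x i\<bar>"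
    unfolding dual_set_def by blast
  have fx: "finite (supp x)" using x(1) by (simp add: fin_supp_def)
  have "v \<le> (\<Sum>i\<in>supp x. \<bar>y i\<bar> * \<bar>x i\<bar>)" unfolding x(3) by (rule order_trans[OF sum_abs]) (simp add: abs_mult)
  also have "\<dots> \<le> (\<Sum>i\<in>supp x. \<bar>y i\<bar>)"
  proof (rule sum_mono)
    fix i show "\<bar>y i\<bar> * \<bar>x i\<bar> \<le> \<bar>y i\<bar>"
      using abs_le_tnorm[OF x(1), of i] x(2) by (simp add: mult_left_le)
  qed
  also have "\<dots> = (\<Sum>i\<in>supp x \<inter> supp y. \<bar>y i\<bar>)"
    by (rule sum.mono_neutral_right[OF fx]) (auto simp: supp_def)
  also have "\<dots> \<le> l1 y" unfolding l1_def by (rule sum_mono2[OF assms(2)]) auto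
  finally show "v \<le> l1 y" .
qed

lemma mono_Tstar:
  assumes w: "in_Tstar w" and le: "\<And>i. \<bar>u i\<bar> \<le> \<bar>w i\<bar>" and u0: "u 0 = 0"
  shows "in_Tstar u \<and> tsnorm u \<le> tsnorm w"
proof -
  have key: "\<bar>\<Sum>i\<in>supp x. u i * x i\<bar> \<le> tsnorm w" if x: "fin_supp x" "tnorm x \<le> 1" for x
  proof -
    define x' where "x' = (\<lambda>i. if 0 \<le> w i then \<bar>x i\<bar> else - \<bar>x i\<bar>)"
    have ax: "\<forall>i. \<bar>x' i\<bar> = \<bar>x i\<bar>" unfolding x'_def by auto
    have sx: "supp x' = supp x" unfolding x'_def supp_def by auto
    have fx': "fin_supp x'" using x(1) sx unfolding fin_supp_def x'_def by auto
    have tx': "tnorm x' = tnorm x" by (rule tnorm_abs[OF ax])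
    have "\<bar>\<Sum>i\<in>supp x. u i * x i\<bar> \<le> (\<Sum>i\<in>supp x. \<bar>u i\<bar> * \<bar>x i\<bar>)"
      by (rule order_trans[OF sum_abs]) (simp add: abs_mult)
    also have "\<dots> \<le> (\<Sum>i\<in>supp x. \<bar>w i\<bar> * \<bar>x i\<bar>)"
      by (rule sum_mono) (simp add: le mult_right_mono)
    also have "\<dots> = (\<Sum>i\<in>supp x'. w i * x' i)" unfolding sx
      by (rule sum.cong) (auto simp: x'_def)
    also have "\<dots> \<le> \<bar>\<Sum>i\<in>supp x'. w i * x' i\<bar>" by simp
    also have "\<dots> \<le> tsnorm w * tnorm x'" by (rule pair_le[OF w fx'])
    also have "\<dots> \<le> tsnorm w" using tx' x(2) tsnorm_nonneg[OF w] by (simp add: mult_left_le)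
    finally show ?thesis .
  qed
  have "in_Tstar u" unfolding in_Tstar_def bdd_above_def
    using key u0 by (auto simp: dual_set_def)
  moreover have "tsnorm u \<le> tsnorm w" by (rule tsnorm_le) (rule key)
  ultimately show ?thesis by simp
qed

lemma tsnorm_zero: "tsnorm (\<lambda>_. 0) = 0"
proof -
  have "in_Tstar (\<lambda>_. 0)" by (rule fs_Tstar) (auto simp: supp_def)
  moreover have "tsnorm (\<lambda>_. 0) \<le> 0" by (rule tsnorm_le) simp
  ultimately show ?thesis using tsnorm_nonneg by force
qed

lemma supp_sum_fin:
  assumes "finite I" "\<forall>l\<in>I. finite (supp (f l))"
  shows "finite (supp (\<lambda>i. \<Sum>l\<in>I. f l i))"
proof (rule finite_subset[of _ "\<Union>l\<in>I. supp (f l)"])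
  show "supp (\<lambda>i. \<Sum>l\<in>I. f l i) \<subseteq> (\<Union>l\<in>I. supp (f l))"
    unfolding supp_def by (auto elim: sum.not_neutral_contains_not_neutral)
  show "finite (\<Union>l\<in>I. supp (f l))" using assms by auto
qed


theorem lemma4p11:
  fixes D :: real and k :: nat and n :: "nat \<Rightarrow> nat"
    and z :: "nat \<Rightarrow> nat \<Rightarrow> nat \<Rightarrow> real" and a :: "nat \<Rightarrow> real"
  assumes "D > 0"
    and "\<forall>(m::nat) (x::nat \<Rightarrow> nat \<Rightarrow> real).
           m \<ge> 1 \<and> (\<forall>l\<in>{1..m}. in_Tstar (x l))
           \<and> (\<forall>l\<in>{1..m}. \<forall>l'\<in>{1..m}. l \<noteq> l' \<longrightarrow> supp (x l) \<inter> supp (x l') = {})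
           \<and> (\<forall>l\<in>{1..m}. \<forall>i\<in>supp (x l). m \<le> i)
           \<longrightarrow> tsnorm (\<lambda>i. \<Sum>l=1..m. x l i) \<le> D * Max ((\<lambda>l. tsnorm (x l)) ` {1..m})"
    and "k \<ge> 1" and "n 0 = k" and "\<forall>j<k. n j < n (Suc j)"
    and "\<forall>j\<in>{1..k}. z j \<in> projR (Rset k (n j) - Rset k (n (j - 1))) ` TTspace
                      \<and> ttnorm (z j) \<le> 1"
  shows "ttnorm (\<lambda>i s. \<Sum>j=1..k. a j * z j i s) \<le> 3 * D * Max ((\<lambda>j. \<bar>a j\<bar>) ` {1..k})"
proof -
  note D = assms(1) and hyp = assms(2) and k1 = assms(3) and n0 = assms(4) and ninc = assms(5)
    and zas = assms(6)
  have nmono: "n i < n j" if "i < j" "j \<le> k" for i j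
    using that
  proof (induction j)
    case 0 then show ?case by simp
  next
    case (Suc j)
    have "n j < n (Suc j)" using ninc Suc.prems by simp
    then show ?case
    proof (cases "i = j")
      case True then show ?thesis using \<open>n j < n (Suc j)\<close> by simp
    next
      case False
      then have "n i < n j" using Suc by simp
      then show ?thesis using \<open>n j < n (Suc j)\<close> by simp
    qed
  qed
  have nle: "n i \<le> n j" if "i \<le> j" "j \<le> k" for i j
    using nmono[of i j] that by (cases "i = j") auto
  have zprop: "k < i \<and> i \<le> n j \<and> 1 \<le> s \<and> s \<le> n j \<and> (n (j-1) < i \<or> n (j-1) < s)"
    if j: "j \<in> {1..k}" and nz: "z j i s \<noteq> 0" for j i s
  proof -
    obtain w where "z j = projR (Rset k (n j) - Rset k (n (j - 1))) w" using zas j by blast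
    then have "(i,s) \<in> Rset k (n j) - Rset k (n (j-1))" using nz by (auto simp: projR_def split: if_splits)
    then show ?thesis by (auto simp: Rset_def)
  qed
  define P where "P j = {n (j-1)<..n j}" for j
  define v where "v j = (\<lambda>i. tsnorm (z j i))" for j
  define A where "A = Max ((\<lambda>j. \<bar>a j\<bar>) ` {1..k})"
  have aA: "\<bar>a j\<bar> \<le> A" if "j\<in>{1..k}" for j unfolding A_def using that by (intro Max_ge) auto
  have A0: "0 \<le> A" using aA[of 1] k1 by auto
  have zT: "in_Tstar (z j i)" if j: "j \<in> {1..k}" for j i
  proof (rule fs_Tstar)
    show "z j i 0 = 0" using zprop[OF j, of i 0] by auto
    show "finite (supp (z j i))"
      by (rule finite_subset[of _ "{1..n j}"]) (auto simp: supp_def dest: zprop[OF j])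
  qed
  have zzero: "z j i = (\<lambda>_. 0)" if j: "j\<in>{1..k}" and "\<not> (k < i \<and> i \<le> n j)" for j i
    using zprop[OF j, of i] that(2) by auto
  have vzero: "v j i = 0" if j: "j\<in>{1..k}" and "\<not> (k < i \<and> i \<le> n j)" for j i
    unfolding v_def using zzero[OF that] tsnorm_zero by simp
  have vsupp: "supp (v j) \<subseteq> {k<..n j}" if j: "j\<in>{1..k}" for j
  proof
    fix i assume "i \<in> supp (v j)"
    then have "v j i \<noteq> 0" by (simp add: supp_def)
    then have "k < i \<and> i \<le> n j" using vzero[OF j, of i] by blast
    then show "i \<in> {k<..n j}" by simp
  qed
  have vT: "in_Tstar (v j)" if j: "j\<in>{1..k}" for j
    by (rule fs_Tstar) (use vzero[OF j, of 0] vsupp[OF j] in \<open>auto intro: finite_subset\<close>)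
  have v0: "0 \<le> v j i" if j: "j\<in>{1..k}" for j i
    unfolding v_def by (rule tsnorm_nonneg[OF zT[OF j]])
  have v1: "tsnorm (v j) \<le> 1" if j: "j\<in>{1..k}" for j
    using zas j unfolding ttnorm_def v_def by auto
  have Pne: "n (j-1) < n j" if j: "j\<in>{1..k}" for j using nmono[of "j-1" j] j by auto
  have Pdisj: "P l \<inter> P l' = {}" if "l\<in>{1..k}" "l'\<in>{1..k}" "l \<noteq> l'" for l l'
  proof -
    have "P l \<inter> P l' = {}" if "l\<in>{1..k}" "l'\<in>{1..k}" "l < l'" for l l'
    proof -
      have "l \<le> l' - 1" "l' - 1 \<le> k" using that by auto
      then have "n l \<le> n (l'-1)" by (rule nle)
      then show ?thesis unfolding P_def by auto
    qed
    note h = this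
    show ?thesis
    proof (cases "l < l'")
      case True then show ?thesis using h that by blast
    next
      case False then have "l' < l" using that by simp
      then show ?thesis using h[of l' l] that by blast
    qed
  qed
  have Pk: "k < i" if "j\<in>{1..k}" "i \<in> P j" for i j
  proof -
    have "n 0 \<le> n (j-1)" using that by (intro nle) auto
    then show ?thesis using that n0 unfolding P_def by auto
  qed
  define xp where "xp l = restr (P l) (v l)" for l
  define v' where "v' j = restr (- P j) (v j)" for j
  have exmax: "\<exists>j. j\<in>{1..k} \<and> (\<forall>j'\<in>{1..k}. v' j' i \<le> v' j i)" for i
  proof -
    let ?M = "Max ((\<lambda>j. v' j i) ` {1..k})"
    have "?M \<in> (\<lambda>j. v' j i) ` {1..k}" using k1 by (intro Max_in) auto
    then obtain j where j: "j\<in>{1..k}" "v' j i = ?M" by (metis (no_types, lifting) imageE)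
    have "\<forall>j'\<in>{1..k}. v' j' i \<le> ?M" by auto
    then show ?thesis using j by metis
  qed
  define sg where "sg i = (SOME j. j\<in>{1..k} \<and> (\<forall>j'\<in>{1..k}. v' j' i \<le> v' j i))" for i
  have sg: "sg i \<in> {1..k} \<and> (\<forall>j'\<in>{1..k}. v' j' i \<le> v' (sg i) i)" for i
    unfolding sg_def by (rule someI_ex[OF exmax])
  define xq where "xq l = (\<lambda>i. if sg i = l then v' l i else 0)" for l
  define p where "p = (\<lambda>i. \<Sum>l=1..k. xp l i)"
  define q where "q = (\<lambda>i. \<Sum>l=1..k. xq l i)"
  have qeq: "q i = v' (sg i) i" for i
    unfolding q_def xq_def using sg[of i] by simp
  have q0: "0 \<le> q i" for i
    unfolding qeq v'_def restr_def using v0 sg[of i] by auto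
  have vq: "v j i \<le> q i" if "j\<in>{1..k}" "i \<notin> P j" for i j
    using sg[of i] that unfolding qeq v'_def restr_def by fastforce
  have peq: "p i = (\<Sum>l=1..k. (if i \<in> P l then v l i else 0))" for i
    by (simp add: p_def xp_def restr_def)
  have xpT: "in_Tstar (xp l) \<and> tsnorm (xp l) \<le> tsnorm (v l)" if l: "l\<in>{1..k}" for l
    by (rule mono_Tstar[OF vT[OF l]]) (use vzero[OF l, of 0] in \<open>auto simp: xp_def restr_def\<close>)
  have xqT: "in_Tstar (xq l) \<and> tsnorm (xq l) \<le> tsnorm (v l)" if l: "l\<in>{1..k}" for l
    by (rule mono_Tstar[OF vT[OF l]]) (use vzero[OF l, of 0] in \<open>auto simp: xq_def v'_def restr_def\<close>)
  have pD: "tsnorm p \<le> D"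
  proof -
    have "tsnorm (\<lambda>i. \<Sum>l=1..k. xp l i) \<le> D * Max ((\<lambda>l. tsnorm (xp l)) ` {1..k})"
    proof (rule hyp[rule_format], intro conjI)
      show "1 \<le> k" by (rule k1)
      show "\<forall>l\<in>{1..k}. in_Tstar (xp l)" using xpT by blast
      show "\<forall>l\<in>{1..k}. \<forall>l'\<in>{1..k}. l \<noteq> l' \<longrightarrow> supp (xp l) \<inter> supp (xp l') = {}"
        using Pdisj unfolding xp_def supp_restr by blast
      show "\<forall>l\<in>{1..k}. \<forall>i\<in>supp (xp l). k \<le> i"
        using Pk unfolding xp_def supp_restr by fastforce
    qed
    also have "\<dots> \<le> D * 1"
      using D k1 xpT v1 by (intro mult_left_mono) (auto, force)
    finally show ?thesis unfolding p_def by simp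
  qed
  have qD: "tsnorm q \<le> D"
  proof -
    have "tsnorm (\<lambda>i. \<Sum>l=1..k. xq l i) \<le> D * Max ((\<lambda>l. tsnorm (xq l)) ` {1..k})"
    proof (rule hyp[rule_format], intro conjI)
      show "1 \<le> k" by (rule k1)
      show "\<forall>l\<in>{1..k}. in_Tstar (xq l)" using xqT by blast
      show "\<forall>l\<in>{1..k}. \<forall>l'\<in>{1..k}. l \<noteq> l' \<longrightarrow> supp (xq l) \<inter> supp (xq l') = {}"
        unfolding xq_def supp_def by auto
      show "\<forall>l\<in>{1..k}. \<forall>i\<in>supp (xq l). k \<le> i"
      proof (intro ballI)
        fix l i assume l: "l\<in>{1..k}" and i: "i \<in> supp (xq l)"
        then have "v l i \<noteq> 0" by (auto simp: supp_def xq_def v'_def restr_def split: if_splits)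
        then show "k \<le> i" using vzero[OF l, of i] by fastforce
      qed
    qed
    also have "\<dots> \<le> D * 1"
      using D k1 xqT v1 by (intro mult_left_mono) (auto, force)
    finally show ?thesis unfolding q_def by simp
  qed
  have pT: "in_Tstar p"
  proof (rule fs_Tstar)
    show "p 0 = 0" unfolding p_def
      by (rule sum.neutral) (use vzero in \<open>auto simp: xp_def restr_def\<close>)
    show "finite (supp p)" unfolding p_def
      by (rule supp_sum_fin) (auto simp: xp_def supp_restr P_def)
  qed
  have qT: "in_Tstar q"
  proof (rule fs_Tstar)
    show "q 0 = 0" unfolding q_def
      by (rule sum.neutral) (use vzero in \<open>auto simp: xq_def v'_def restr_def\<close>)
    have s1: "supp (xq l) \<subseteq> supp (v l)" for l by (auto simp: supp_def xq_def v'_def restr_def)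
    have "finite (supp (xq l))" if "l \<in> {1..k}" for l
      using s1[of l] vsupp[OF that] by (meson finite_greaterThanAtMost finite_subset)
    then show "finite (supp q)" unfolding q_def
      by (intro supp_sum_fin) auto
  qed
  have PMin: "Min (P j) = Suc (n (j-1))" if j: "j\<in>{1..k}" for j
    by (rule Min_eqI) (use Pne[OF j] in \<open>auto simp: P_def\<close>)
  have PMax: "Max (P j) = n j" if j: "j\<in>{1..k}" for j
    by (rule Max_eqI) (use Pne[OF j] in \<open>auto simp: P_def\<close>)
  have adm: "admissible (map P [1..<Suc k])"
    unfolding admissible_def
  proof (intro conjI allI impI ballI)
    show "map P [1..<Suc k] \<noteq> []" using k1 by simp
    fix E assume "E \<in> set (map P [1..<Suc k])"
    then have "E \<in> P ` set [1..<Suc k]" by (simp only: set_map)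
    then obtain j0 where j0: "j0 \<in> set [1..<Suc k]" "E = P j0" by blast
    then have j: "j0\<in>{1..k}" "E = P j0" by auto
    then show "finite E" "E \<noteq> {}" using Pne[OF j(1)] by (auto simp: P_def)
  next
    show "length (map P [1..<Suc k]) \<le> Min (hd (map P [1..<Suc k]))"
    proof -
      have "hd (map P [1..<Suc k]) = P 1" using k1 by (simp add: upt_conv_Cons del: upt_Suc)
      then show ?thesis using k1 PMin[of 1] n0 by simp
    qed
  next
    fix j assume "Suc j < length (map P [1..<Suc k])"
    then have j: "Suc j < k" by (simp del: upt_Suc)
    have e1: "map P [1..<Suc k] ! j = P (Suc j)" using j by (simp del: upt_Suc)
    have e2: "map P [1..<Suc k] ! Suc j = P (Suc (Suc j))" using j by (simp del: upt_Suc)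
    show "Max (map P [1..<Suc k] ! j) < Min (map P [1..<Suc k] ! Suc j)"
      unfolding e1 e2 using PMax[of "Suc j"] PMin[of "Suc (Suc j)"] j by simp
  qed
  have lowP: "(\<Sum>j=1..k. tnorm (restr (P j) x)) \<le> 2 * tnorm x" if x: "fin_supp x" for x
  proof -
    have "(\<Sum>j=1..k. tnorm (restr (P j) x)) = sum_list (map (\<lambda>E. tnorm (restr E x)) (map P [1..<Suc k]))"
    proof -
      have "set [1..<Suc k] = {1..k}" by (simp only: set_upt atLeastLessThanSuc_atLeastAtMost)
      then show ?thesis
        using sum_set_upt_conv_sum_list_nat[of "\<lambda>j. tnorm (restr (P j) x)" 1 "Suc k"]
        by (simp only: map_map comp_def)
    qed
    also have "\<dots> \<le> 2 * tnorm x" by (rule lower_est[OF adm x])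
    finally show ?thesis .
  qed
  have KB: "tsnorm (\<lambda>s. \<Sum>j=1..k. a j * z j i s) \<le> A * p i + 2 * A * q i" for i
  proof (rule tsnorm_le)
    fix x assume x: "fin_supp x" "tnorm x \<le> 1"
    have fx: "finite (supp x)" using x(1) by (simp add: fin_supp_def)
    define t where "t j = tnorm (restr (P j) x)" for j
    have t0: "0 \<le> t j" for j unfolding t_def by (rule tnorm_nonneg[OF fin_supp_restr[OF x(1)]])
    have pj: "\<bar>\<Sum>s\<in>supp x. z j i s * x s\<bar> \<le> (if i \<in> P j then v j i else q i * t j)"
      if j: "j\<in>{1..k}" for j
    proof (cases "i \<in> P j")
      case True
      have "\<bar>\<Sum>s\<in>supp x. z j i s * x s\<bar> \<le> v j i * tnorm x"
        unfolding v_def by (rule pair_le[OF zT[OF j] x(1)])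
      also have "\<dots> \<le> v j i" using v0[OF j] x(2) by (simp add: mult_left_le)
      finally show ?thesis using True by simp
    next
      case False
      have "(\<Sum>s\<in>supp x. z j i s * x s) = (\<Sum>s\<in>supp x \<inter> P j. z j i s * x s)"
      proof (rule sum.mono_neutral_right[OF fx])
        show "\<forall>s\<in>supp x - supp x \<inter> P j. z j i s * x s = 0"
          using zprop[OF j, of i] False unfolding P_def by force
      qed auto
      also have "\<dots> = (\<Sum>s\<in>supp (restr (P j) x). z j i s * restr (P j) x s)"
        unfolding supp_restr by (rule sum.cong) (auto simp: restr_def)
      finally have "\<bar>\<Sum>s\<in>supp x. z j i s * x s\<bar> \<le> v j i * t j"
        unfolding v_def t_def using pair_le[OF zT[OF j] fin_supp_restr[OF x(1)]] by simp
      also have "\<dots> \<le> q i * t j" using vq[OF j False] t0 by (simp add: mult_right_mono)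
      finally show ?thesis using False by simp
    qed
    have "(\<Sum>s\<in>supp x. (\<Sum>j=1..k. a j * z j i s) * x s) = (\<Sum>s\<in>supp x. \<Sum>j=1..k. a j * (z j i s * x s))"
      by (simp add: sum_distrib_right mult.assoc)
    also have "\<dots> = (\<Sum>j=1..k. \<Sum>s\<in>supp x. a j * (z j i s * x s))" by (rule sum.swap)
    also have "\<dots> = (\<Sum>j=1..k. a j * (\<Sum>s\<in>supp x. z j i s * x s))" by (simp add: sum_distrib_left)
    finally have "\<bar>\<Sum>s\<in>supp x. (\<Sum>j=1..k. a j * z j i s) * x s\<bar> \<le> (\<Sum>j=1..k. \<bar>a j\<bar> * \<bar>\<Sum>s\<in>supp x. z j i s * x s\<bar>)"
      by (simp add: order_trans[OF sum_abs] abs_mult)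
    also have "\<dots> \<le> (\<Sum>j=1..k. A * (if i \<in> P j then v j i else q i * t j))"
    proof (rule sum_mono)
      fix j assume j: "j \<in> {1..k}"
      have "0 \<le> (if i \<in> P j then v j i else q i * t j)" using v0[OF j] q0 t0 by simp
      then show "\<bar>a j\<bar> * \<bar>\<Sum>s\<in>supp x. z j i s * x s\<bar> \<le> A * (if i \<in> P j then v j i else q i * t j)"
        using aA[OF j] pj[OF j] A0 by (intro mult_mono) auto
    qed
    also have "\<dots> = A * (\<Sum>j=1..k. (if i \<in> P j then v j i else 0)) + A * (\<Sum>j=1..k. (if i \<in> P j then 0 else q i * t j))"
    proof -
      have "(\<Sum>j=1..k. A * (if i \<in> P j then v j i else q i * t j))
          = (\<Sum>j=1..k. A * ((if i \<in> P j then v j i else 0) + (if i \<in> P j then 0 else q i * t j)))"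
        by (rule sum.cong) auto
      also have "\<dots> = A * (\<Sum>j=1..k. (if i \<in> P j then v j i else 0)) + A * (\<Sum>j=1..k. (if i \<in> P j then 0 else q i * t j))"
        by (simp only: distrib_left sum.distrib sum_distrib_left)
      finally show ?thesis .
    qed
    also have "\<dots> \<le> A * p i + A * (q i * (\<Sum>j=1..k. t j))"
    proof -
      have "(\<Sum>j=1..k. (if i \<in> P j then 0 else q i * t j)) \<le> (\<Sum>j=1..k. q i * t j)"
        by (rule sum_mono) (use q0 t0 in simp)
      then show ?thesis unfolding peq[symmetric] sum_distrib_left[symmetric]
        using A0 by (simp add: mult_left_mono)
    qed
    also have "\<dots> \<le> A * p i + A * (q i * 2)"
    proof -
      have "(\<Sum>j=1..k. t j) \<le> 2" unfolding t_def using lowP[OF x(1)] x(2) by linarith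
      then show ?thesis using A0 q0[of i] by (simp add: mult_left_mono)
    qed
    finally show "\<bar>\<Sum>s\<in>supp x. (\<Sum>j=1..k. a j * z j i s) * x s\<bar> \<le> A * p i + 2 * A * q i"
      by (simp add: algebra_simps)
  qed
  have WT: "in_Tstar (\<lambda>s. \<Sum>j=1..k. a j * z j i s)" for i
  proof (rule fs_Tstar)
    show "(\<Sum>j=1..k. a j * z j i 0) = 0" using zprop[of _ i 0] by (intro sum.neutral) force
    have "finite (supp (z j i))" if "j\<in>{1..k}" for j
      using zT[OF that] by (rule_tac finite_subset[of _ "{1..n j}"]) (auto simp: supp_def dest: zprop[OF that])
    then show "finite (supp (\<lambda>s. \<Sum>j=1..k. a j * z j i s))"
      by (intro supp_sum_fin) (auto simp: supp_def elim: finite_subset[rotated])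
  qed
  show ?thesis
    unfolding ttnorm_def A_def[symmetric]
  proof (rule tsnorm_le)
    fix x assume x: "fin_supp x" "tnorm x \<le> 1"
    define u where "u i = tsnorm (\<lambda>s. \<Sum>j=1..k. a j * z j i s)" for i
    have u0: "0 \<le> u i" for i unfolding u_def by (rule tsnorm_nonneg[OF WT])
    define ax where "ax = (\<lambda>i. \<bar>x i\<bar>)"
    have fax: "fin_supp ax" using x(1) by (auto simp: fin_supp_def ax_def supp_def)
    have sax: "supp ax = supp x" by (auto simp: ax_def supp_def)
    have tax: "tnorm ax \<le> 1" using tnorm_abs[of ax x] x(2) by (simp add: ax_def)
    have pb: "(\<Sum>i\<in>supp x. p i * \<bar>x i\<bar>) \<le> D"
    proof -
      have "(\<Sum>i\<in>supp x. p i * \<bar>x i\<bar>) \<le> \<bar>\<Sum>i\<in>supp ax. p i * ax i\<bar>" unfolding sax by (simp add: ax_def)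
      also have "\<dots> \<le> tsnorm p * tnorm ax" by (rule pair_le[OF pT fax])
      also have "\<dots> \<le> tsnorm p" using tax tsnorm_nonneg[OF pT] by (simp add: mult_left_le)
      finally show ?thesis using pD by linarith
    qed
    have qb: "(\<Sum>i\<in>supp x. q i * \<bar>x i\<bar>) \<le> D"
    proof -
      have "(\<Sum>i\<in>supp x. q i * \<bar>x i\<bar>) \<le> \<bar>\<Sum>i\<in>supp ax. q i * ax i\<bar>" unfolding sax by (simp add: ax_def)
      also have "\<dots> \<le> tsnorm q * tnorm ax" by (rule pair_le[OF qT fax])
      also have "\<dots> \<le> tsnorm q" using tax tsnorm_nonneg[OF qT] by (simp add: mult_left_le)
      finally show ?thesis using qD by linarith
    qed
    have "\<bar>\<Sum>i\<in>supp x. u i * x i\<bar> \<le> (\<Sum>i\<in>supp x. u i * \<bar>x i\<bar>)"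
      using u0 by (simp add: order_trans[OF sum_abs] abs_mult)
    also have "\<dots> \<le> (\<Sum>i\<in>supp x. (A * p i + 2 * A * q i) * \<bar>x i\<bar>)"
      by (rule sum_mono, rule mult_right_mono, unfold u_def, rule KB, simp)
    also have "\<dots> = A * (\<Sum>i\<in>supp x. p i * \<bar>x i\<bar>) + 2 * A * (\<Sum>i\<in>supp x. q i * \<bar>x i\<bar>)"
      by (simp add: sum_distrib_left sum.distrib algebra_simps)
    also have "\<dots> \<le> A * D + 2 * A * D"
      using pb qb A0 by (intro add_mono mult_left_mono) auto
    finally show "\<bar>\<Sum>i\<in>supp x. tsnorm (\<lambda>s. \<Sum>j = 1..k. a j * z j i s) * x i\<bar> \<le> 3 * D * A"
      unfolding u_def by (simp add: algebra_simps)
  qed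
qed

end
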